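(* Assume $R\neq0$. Then: (1) every $\nu_{(w,e)}$ with $w=\sum_n r_nx^n\in W_1$ satisfying $\sum_n r_n=1$ is a right unit of $T_e$; in particular $T_e$ has more than one right unit; (2) every minimal prime ideal $I\neq T_e$ of $End_1$ has at most one right unit. Consequently, $T_e$ is the unique minimal prime ideal of $End_1$ having more than one right unit.
   Context: $R$ is a commutative associative ring with unit. A group representation $(A,G,\cdot)$ is an $R$-module $A$ with a right action of the group $G$ by $R$-module automorphisms; homomorphisms are pairs $(\mu^{(1)},\mu^{(2)})$ ($R$-linear map, group homomorphism) with $\mu^{(1)}(a\cdot g)=\mu^{(1)}(a)\bullet\mu^{(2)}(g)$. $F_1=\langle x\rangle$ is infinite cyclic with identity $e$, and $W_1=RF_1$ is the group algebra on which $F_1$ acts by right multiplication. $End_1$ is the monoid of endomorphisms of $(W_1,F_1)$. $\nu_{(w,g)}$ denotes the endomorphism with $1\mapsto w$ and $x\mapsto g$, and $T_e=\{\nu_{(w,e)}:w\in W_1\}$. Ideals of a monoid $M$ are subsets $I$ with $MI\cup IM\subseteq I$; $I$ is prime if $ab\in I$ implies $a\in I$ or $b\in I$. A right unit of $I$ is $u\in I$ with $\nu\circ u=\nu$ for all $\nu\in I$. *)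

theory Defs
  imports Main "HOL-Library.Poly_Mapping"
begin

text \<open>F_1 is represented additively by int: the exponent n stands for x^n,
  so the generator x is 1 and the identity e is 0.  W_1 is the group ring
  of finitely supported functions with convolution product).\<close>

type_synonym 'r W1 = "int \<Rightarrow>\<^sub>0 'r"

definition xpow :: "int \<Rightarrow> 'r::comm_ring_1 W1" where
  "xpow n = Poly_Mapping.single n 1"

definition act :: "'r::comm_ring_1 W1 \<Rightarrow> int \<Rightarrow> 'r W1" where
  "act a g = a * xpow g"

definition smul :: "'r::comm_ring_1 \<Rightarrow> 'r W1 \<Rightarrow> 'r W1" where
  "smul r a = Poly_Mapping.map (\<lambda>c. r * c) a"

definition R_linear :: "('r::comm_ring_1 W1 \<Rightarrow> 'r W1) \<Rightarrow> bool" where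
  "R_linear f \<longleftrightarrow> (\<forall>a b. f (a + b) = f a + f b) \<and> (\<forall>r a. f (smul r a) = smul r (f a))"

definition group_hom_F1 :: "(int \<Rightarrow> int) \<Rightarrow> bool" where
  "group_hom_F1 h \<longleftrightarrow> (\<forall>g g'. h (g + g') = h g + h g')"

type_synonym 'r endo = "('r W1 \<Rightarrow> 'r W1) \<times> (int \<Rightarrow> int)"

definition End1 :: "'r::comm_ring_1 endo set" where
  "End1 = {(m1, m2). R_linear m1 \<and> group_hom_F1 m2 \<and>
             (\<forall>a g. m1 (act a g) = act (m1 a) (m2 g))}"

definition ecomp :: "'r endo \<Rightarrow> 'r endo \<Rightarrow> 'r endo" where
  "ecomp u v = (fst u \<circ> fst v, snd u \<circ> snd v)"

definition nu :: "'r::comm_ring_1 W1 \<Rightarrow> int \<Rightarrow> 'r endo" where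
  "nu w g = (THE u. u \<in> End1 \<and> fst u 1 = w \<and> snd u 1 = g)"

definition T_e :: "'r::comm_ring_1 endo set" where
  "T_e = {nu w 0 | w. True}"

definition is_ideal :: "'r::comm_ring_1 endo set \<Rightarrow> bool" where
  "is_ideal I \<longleftrightarrow> I \<noteq> {} \<and> I \<subseteq> End1 \<and>
     (\<forall>m\<in>End1. \<forall>i\<in>I. ecomp m i \<in> I \<and> ecomp i m \<in> I)"

definition is_prime_ideal :: "'r::comm_ring_1 endo set \<Rightarrow> bool" where
  "is_prime_ideal I \<longleftrightarrow> is_ideal I \<and> I \<noteq> End1 \<and>
     (\<forall>a\<in>End1. \<forall>b\<in>End1. ecomp a b \<in> I \<longrightarrow> a \<in> I \<or> b \<in> I)"

definition is_minimal_prime_ideal :: "'r::comm_ring_1 endo set \<Rightarrow> bool" where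
  "is_minimal_prime_ideal I \<longleftrightarrow> is_prime_ideal I \<and>
     (\<forall>J. is_prime_ideal J \<and> J \<subseteq> I \<longrightarrow> J = I)"

definition is_right_unit :: "'r endo \<Rightarrow> 'r endo set \<Rightarrow> bool" where
  "is_right_unit u I \<longleftrightarrow> u \<in> I \<and> (\<forall>v\<in>I. ecomp v u = v)"

definition coeff_sum :: "'r::comm_ring_1 W1 \<Rightarrow> 'r" where
  "coeff_sum w = (\<Sum>n\<in>Poly_Mapping.keys w. Poly_Mapping.lookup w n)"

end

theory Submission
  imports Defs
begin

definition phi :: "int \<Rightarrow> 'r::comm_ring_1 W1 \<Rightarrow> 'r W1" where
  "phi k a = (\<Sum>n\<in>Poly_Mapping.keys a. Poly_Mapping.single (k*n) (Poly_Mapping.lookup a n))"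

lemma phi_sub:
  assumes "finite S" "Poly_Mapping.keys a \<subseteq> S"
  shows "phi k a = (\<Sum>n\<in>S. Poly_Mapping.single (k*n) (Poly_Mapping.lookup a n))"
  unfolding phi_def
  by (rule sum.mono_neutral_left) (use assms in \<open>auto simp: in_keys_iff\<close>)

lemma phi_add: "phi k (a + b) = phi k a + phi k b"
proof -
  let ?S = "Poly_Mapping.keys a \<union> Poly_Mapping.keys b"
  have f: "finite ?S" by simp
  have "Poly_Mapping.keys (a+b) \<subseteq> ?S" by (simp add: keys_add)
  then have "phi k (a+b) = (\<Sum>n\<in>?S. Poly_Mapping.single (k*n) (Poly_Mapping.lookup (a+b) n))"
    using phi_sub f by blast
  also have "\<dots> = (\<Sum>n\<in>?S. Poly_Mapping.single (k*n) (Poly_Mapping.lookup a n))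
      + (\<Sum>n\<in>?S. Poly_Mapping.single (k*n) (Poly_Mapping.lookup b n))"
    by (simp add: lookup_add single_add sum.distrib)
  also have "\<dots> = phi k a + phi k b"
    using phi_sub[OF f, of a k] phi_sub[OF f, of b k] by simp
  finally show ?thesis .
qed

lemma phi_single: "phi k (Poly_Mapping.single n c) = Poly_Mapping.single (k*n) c"
proof -
  have "Poly_Mapping.keys (Poly_Mapping.single n c) \<subseteq> {n}" by simp
  then show ?thesis using phi_sub[of "{n}" "Poly_Mapping.single n c" k] by simp
qed

lemma phi_zero: "phi k 0 = 0"
  by (simp add: phi_def)

lemma update_as_add: "a \<notin> Poly_Mapping.keys f \<Longrightarrow> Poly_Mapping.update a b f = f + Poly_Mapping.single a b"
  by (rule poly_mapping_eqI) (auto simp: lookup_update lookup_add lookup_single in_keys_iff when_def)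

lemma pm_induct:
  assumes "P 0" "\<And>a b. P a \<Longrightarrow> P b \<Longrightarrow> P (a+b)" "\<And>n c. P (Poly_Mapping.single n c)"
  shows "P a"
proof (induct a rule: update_induct)
  case const then show ?case using assms by simp
next
  case (update a b f) then show ?case using assms update_as_add by metis
qed

lemma single_sum: "Poly_Mapping.single k (sum f S) = (\<Sum>x\<in>S. Poly_Mapping.single k (f x))"
  by (induct S rule: infinite_finite_induct) (auto simp: single_add)

lemma phi_1: "phi 1 a = a"
  by (induct a rule: pm_induct) (auto simp: phi_zero phi_add phi_single)

lemma phi_0: "phi 0 a = Poly_Mapping.single 0 (coeff_sum a)"
  by (simp add: phi_def coeff_sum_def single_sum)

lemma phi_one: "phi k 1 = 1"
  using phi_single[of k 0 1] by simp

lemma phi_smul: "phi k (Poly_Mapping.single 0 r * a) = Poly_Mapping.single 0 r * phi k a"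
  by (induct a rule: pm_induct) (auto simp: phi_zero phi_add phi_single distrib_left mult_single)

lemma phi_shift: "phi k (a * xpow g) = phi k a * xpow (k*g)"
  by (induct a rule: pm_induct) (auto simp: xpow_def phi_zero phi_add phi_single distrib_right mult_single algebra_simps)

definition E :: "'r::comm_ring_1 W1 \<Rightarrow> int \<Rightarrow> 'r endo" where
  "E w k = (\<lambda>a. w * phi k a, \<lambda>g. k*g)"

lemma smul_conv: "smul r a = Poly_Mapping.single 0 r * a"
  by (simp add: smul_def mult_map_scale_conv_mult)

lemma E_in: "E w k \<in> End1"
proof -
  have "w * phi k (Poly_Mapping.single 0 r * a) = Poly_Mapping.single 0 r * (w * phi k a)" for r a
    by (simp only: phi_smul mult.left_commute)
  moreover have "w * phi k (a * xpow g) = w * phi k a * xpow (k * g)" for a g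
    by (simp only: phi_shift mult.assoc)
  ultimately show ?thesis
    unfolding End1_def E_def R_linear_def group_hom_F1_def act_def smul_conv
    by (auto simp: phi_add distrib_left distrib_right)
qed

lemma E_W: "fst (E w k) 1 = w" and E_K: "snd (E w k) 1 = k"
  by (auto simp: E_def phi_one)

lemma E_inj: "E w k = E w' k' \<Longrightarrow> w = w' \<and> k = k'"
  by (metis E_W E_K)

lemma hom_lin: assumes "group_hom_F1 h" shows "h g = h 1 * g"
proof -
  have h: "h (a+b) = h a + h b" for a b using assms by (simp add: group_hom_F1_def)
  have h0: "h 0 = 0" using h[of 0 0] by simp
  show ?thesis
  proof (induct g rule: int_induct[where k=0])
    case base then show ?case using h0 by simp
  next
    case (step1 i) then show ?case using h[of i 1] by (simp add: algebra_simps)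
  next
    case (step2 i) then show ?case using h[of "i-1" 1] by (simp add: algebra_simps)
  qed
qed

lemma rep: assumes "u \<in> End1" shows "u = E (fst u 1) (snd u 1)"
proof -
  obtain m1 m2 where u: "u = (m1, m2)" by force
  have lin: "R_linear m1" and hm: "group_hom_F1 m2" and ac: "\<And>a g. m1 (act a g) = act (m1 a) (m2 g)"
    using assms u by (auto simp: End1_def)
  have add: "m1 (a+b) = m1 a + m1 b" for a b using lin by (simp add: R_linear_def)
  have sm: "m1 (smul r a) = smul r (m1 a)" for r a using lin by (simp add: R_linear_def)
  have m2: "m2 g = m2 1 * g" for g using hom_lin[OF hm] .
  have "m1 a = m1 1 * phi (m2 1) a" for a
  proof (induct a rule: pm_induct)
    case 1 then show ?case using add[of 0 0] by (simp add: phi_zero)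
  next
    case (2 a b) then show ?case by (simp add: add phi_add distrib_left)
  next
    case (3 n c)
    have "Poly_Mapping.single n c = smul c (act 1 n)"
      by (simp add: smul_conv act_def xpow_def mult_single)
    then have "m1 (Poly_Mapping.single n c) = smul c (act (m1 1) (m2 n))"
      by (simp add: sm ac)
    also have "\<dots> = Poly_Mapping.single 0 c * (m1 1 * Poly_Mapping.single (m2 1 * n) 1)"
      by (simp add: smul_conv act_def xpow_def m2[of n])
    also have "\<dots> = m1 1 * (Poly_Mapping.single 0 c * Poly_Mapping.single (m2 1 * n) 1)"
      by (simp only: mult.left_commute)
    also have "\<dots> = m1 1 * phi (m2 1) (Poly_Mapping.single n c)"
      by (simp add: mult_single phi_single)
    finally show ?case .
  qed
  then have A: "m1 = (\<lambda>a. m1 1 * phi (m2 1) a)" by (intro ext)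
  have B: "m2 = (\<lambda>g. m2 1 * g)" using m2 by (intro ext)
  show ?thesis unfolding u E_def fst_conv snd_conv prod.inject using A B by blast
qed

lemma nu_E: "nu w g = E w g"
  unfolding nu_def
proof (rule the_equality)
  show "E w g \<in> End1 \<and> fst (E w g) 1 = w \<and> snd (E w g) 1 = g" using E_in E_W E_K by blast
next
  fix u assume "u \<in> End1 \<and> fst u 1 = w \<and> snd u 1 = g"
  then show "u = E w g" using rep by metis
qed

lemma ecomp_in: "u \<in> End1 \<Longrightarrow> v \<in> End1 \<Longrightarrow> ecomp u v \<in> End1"
  unfolding End1_def ecomp_def R_linear_def group_hom_F1_def by auto

lemma ecomp_E: "ecomp (E w k) (E w' k') = E (w * phi k w') (k*k')"
proof -
  have "ecomp (E w k) (E w' k') \<in> End1" using ecomp_in E_in by blast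
  then have "ecomp (E w k) (E w' k') = E (fst (ecomp (E w k) (E w' k')) 1) (snd (ecomp (E w k) (E w' k')) 1)"
    by (rule rep)
  then show ?thesis by (simp add: ecomp_def E_def phi_one)
qed

lemma End1_E: "End1 = range (\<lambda>(w,k). E w k)"
  using rep E_in by fastforce

lemma Te_E: "T_e = {E w 0 | w. True}"
  by (simp add: T_e_def nu_E)

lemma End1_obtain: assumes "u \<in> End1" obtains w k where "u = E w k"
  using rep[OF assms] by blast

lemma Te_ideal: "is_ideal (T_e::'r::comm_ring_1 endo set)"
  unfolding is_ideal_def
proof (intro conjI ballI)
  have "(E 0 0::'r endo) \<in> T_e" by (auto simp: Te_E)
  then show "(T_e::'r endo set) \<noteq> {}" by blast
  show "(T_e::'r endo set) \<subseteq> End1" by (auto simp: Te_E E_in)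
next
  fix m i :: "'r endo" assume m: "m \<in> End1" and i: "i \<in> T_e"
  obtain a k where ma: "m = E a k" using End1_obtain[OF m] .
  obtain b where ib: "i = E b 0" using i by (auto simp: Te_E)
  show "ecomp m i \<in> T_e" by (auto simp: ma ib ecomp_E Te_E)
  show "ecomp i m \<in> T_e" by (auto simp: ma ib ecomp_E Te_E)
qed

lemma Te_prime: "is_prime_ideal (T_e::'r::comm_ring_1 endo set)"
  unfolding is_prime_ideal_def
proof (intro conjI ballI impI)
  show "is_ideal (T_e::'r endo set)" by (rule Te_ideal)
  have "(E 1 1::'r endo) \<notin> T_e" using E_inj by (fastforce simp: Te_E)
  then show "(T_e::'r endo set) \<noteq> End1" using E_in by blast
next
  fix a b :: "'r endo" assume a: "a \<in> End1" and b: "b \<in> End1" and ab: "ecomp a b \<in> T_e"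
  obtain w k where aw: "a = E w k" using End1_obtain[OF a] .
  obtain w' k' where bw: "b = E w' k'" using End1_obtain[OF b] .
  obtain z where "ecomp a b = E z 0" using ab by (auto simp: Te_E)
  then have "k * k' = 0" using E_inj by (metis aw bw ecomp_E)
  then show "a \<in> T_e \<or> b \<in> T_e" by (auto simp: aw bw Te_E)
qed

lemma Te_min:
  assumes J: "is_prime_ideal (J::'r::comm_ring_1 endo set)" and sub: "J \<subseteq> T_e"
  shows "J = T_e"
proof
  show "J \<subseteq> T_e" by (rule sub)
  have id: "is_ideal J" and pr: "\<And>a b. a \<in> End1 \<Longrightarrow> b \<in> End1 \<Longrightarrow> ecomp a b \<in> J \<Longrightarrow> a \<in> J \<or> b \<in> J"
    using J by (auto simp: is_prime_ideal_def)
  have JE: "J \<subseteq> End1" and cl: "\<And>m i. m \<in> End1 \<Longrightarrow> i \<in> J \<Longrightarrow> ecomp m i \<in> J"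
    using id by (auto simp: is_ideal_def)
  obtain j where "j \<in> J" using id by (auto simp: is_ideal_def)
  then obtain w where wJ: "E w 0 \<in> J" using sub by (auto simp: Te_E)
  have "ecomp (E w 1) (E 1 0) = E w 0" by (simp add: ecomp_E phi_1)
  moreover have "E w 1 \<notin> J"
  proof
    assume "E w 1 \<in> J"
    then obtain v where "E w 1 = (E v 0 :: 'r endo)" using sub by (auto simp: Te_E)
    then show False by (auto dest!: E_inj)
  qed
  ultimately have "ecomp (E w 1) (E 1 0) \<in> J \<and> E w 1 \<notin> J" using wJ by simp
  then have one: "(E 1 0::'r endo) \<in> J" using pr[OF E_in E_in] by blast
  show "T_e \<subseteq> J"
  proof
    fix x :: "'r endo" assume "x \<in> T_e"
    then obtain v where x: "x = E v 0" by (auto simp: Te_E)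
    have "ecomp (E v 0) (E 1 0) \<in> J" using cl[OF E_in one] .
    moreover have "ecomp (E v 0) (E 1 0) = E v 0" by (simp add: ecomp_E phi_one)
    ultimately show "x \<in> J" using x by simp
  qed
qed

lemma ru_unique:
  assumes I: "is_prime_ideal (I::'r::comm_ring_1 endo set)"
    and u: "is_right_unit u I" and v: "is_right_unit v I" and ne: "u \<noteq> v"
  shows "I = T_e"
proof -
  have IE: "I \<subseteq> End1" using I by (auto simp: is_prime_ideal_def is_ideal_def)
  have uI: "u \<in> I" and uu: "\<And>z. z \<in> I \<Longrightarrow> ecomp z u = z" using u by (auto simp: is_right_unit_def)
  have vI: "v \<in> I" and vv: "\<And>z. z \<in> I \<Longrightarrow> ecomp z v = z" using v by (auto simp: is_right_unit_def)
  obtain w k where uw: "u = E w k" using End1_obtain IE uI by blast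
  obtain w' k' where vw: "v = E w' k'" using End1_obtain IE vI by blast
  have e1: "E (w * phi k w') (k*k') = E w k" using vv[OF uI] by (simp add: uw vw ecomp_E)
  have e2: "E (w' * phi k' w) (k'*k) = E w' k'" using uu[OF vI] by (simp add: uw vw ecomp_E)
  have e3: "E (w * phi k w) (k*k) = E w k" using uu[OF uI] by (simp add: uw ecomp_E)
  have kk: "k = k'" using E_inj[OF e1] E_inj[OF e2] by (simp add: mult.commute)
  have "k * k = k" using E_inj[OF e3] by simp
  then have "k * k = k * 1" by simp
  then have "k = 0 \<or> k = 1" by (simp only: mult_cancel_left)
  then show ?thesis
  proof
    assume k1: "k = 1"
    then have "w * w' = w" "w' * w = w'" using E_inj[OF e1] E_inj[OF e2] kk by (auto simp: phi_1)
    then have "w = w'" by (simp add: mult.commute)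
    then show ?thesis using ne uw vw kk by simp
  next
    assume k0: "k = 0"
    have "I \<subseteq> T_e"
    proof
      fix z assume zI: "z \<in> I"
      obtain a j where za: "z = E a j" using End1_obtain IE zI by blast
      have "E (a * phi j w) (j*0) = E a j" using uu[OF zI] by (simp add: za uw k0 ecomp_E)
      then have "j * 0 = j" by (auto dest!: E_inj)
      then have "j = 0" by simp
      then show "z \<in> T_e" by (auto simp: za Te_E)
    qed
    then show ?thesis using Te_min I by blast
  qed
qed

theorem mainTheorem13:
  assumes "(0::'r::comm_ring_1) \<noteq> 1"
  shows "(\<forall>w::'r W1. coeff_sum w = 1 \<longrightarrow> is_right_unit (nu w 0) T_e)
       \<and> (\<exists>u v. u \<noteq> v \<and> is_right_unit u (T_e::'r endo set) \<and> is_right_unit v T_e)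
       \<and> (\<forall>I::'r endo set. is_minimal_prime_ideal I \<and> I \<noteq> T_e \<longrightarrow>
            (\<forall>u v. is_right_unit u I \<and> is_right_unit v I \<longrightarrow> u = v))
       \<and> is_minimal_prime_ideal (T_e::'r endo set)
       \<and> (\<forall>I::'r endo set. is_minimal_prime_ideal I \<and>
            (\<exists>u v. u \<noteq> v \<and> is_right_unit u I \<and> is_right_unit v I) \<longrightarrow> I = T_e)"
proof -
  have P1: "is_right_unit (nu w 0) (T_e::'r endo set)" if "coeff_sum w = 1" for w :: "'r W1"
    unfolding is_right_unit_def
  proof (intro conjI ballI)
    show "nu w 0 \<in> T_e" by (auto simp: T_e_def)
    fix v :: "'r endo" assume "v \<in> T_e"
    then obtain a where "v = E a 0" by (auto simp: Te_E)
    then show "ecomp v (nu w 0) = v" using that by (simp add: nu_E ecomp_E phi_0)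
  qed
  have cs1: "coeff_sum (1::'r W1) = 1" by (simp add: coeff_sum_def)
  have cs2: "coeff_sum (xpow 1::'r W1) = 1" by (simp add: coeff_sum_def xpow_def)
  have dif: "(1::'r W1) \<noteq> xpow 1"
  proof
    assume "(1::'r W1) = xpow 1"
    then have "Poly_Mapping.lookup (1::'r W1) 0 = Poly_Mapping.lookup (xpow 1::'r W1) 0" by simp
    then show False using assms by (simp add: xpow_def lookup_single_not_eq)
  qed
  have P2: "\<exists>u v. u \<noteq> v \<and> is_right_unit u (T_e::'r endo set) \<and> is_right_unit v T_e"
  proof (intro exI conjI)
    show "nu 1 0 \<noteq> (nu (xpow 1) 0 :: 'r endo)"
    proof
      assume "nu 1 0 = (nu (xpow 1) 0 :: 'r endo)"
      then have "E 1 0 = (E (xpow 1) 0 :: 'r endo)" by (simp add: nu_E)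
      then show False using dif by (auto dest!: E_inj)
    qed
    show "is_right_unit (nu 1 0) (T_e::'r endo set)" using P1 cs1 by blast
    show "is_right_unit (nu (xpow 1) 0) (T_e::'r endo set)" using P1 cs2 by blast
  qed
  have P4: "is_minimal_prime_ideal (T_e::'r endo set)"
    unfolding is_minimal_prime_ideal_def using Te_prime Te_min by blast
  show ?thesis
  proof (intro conjI allI impI)
    fix w :: "'r W1" assume "coeff_sum w = 1" then show "is_right_unit (nu w 0) T_e" by (rule P1)
  next
    show "\<exists>u v. u \<noteq> v \<and> is_right_unit u (T_e::'r endo set) \<and> is_right_unit v T_e" by (rule P2)
  next
    fix I :: "'r endo set" and u v
    assume "is_minimal_prime_ideal I \<and> I \<noteq> T_e" "is_right_unit u I \<and> is_right_unit v I"
    then show "u = v" using ru_unique unfolding is_minimal_prime_ideal_def by blast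
  next
    show "is_minimal_prime_ideal (T_e::'r endo set)" by (rule P4)
  next
    fix I :: "'r endo set"
    assume "is_minimal_prime_ideal I \<and> (\<exists>u v. u \<noteq> v \<and> is_right_unit u I \<and> is_right_unit v I)"
    then show "I = T_e" using ru_unique unfolding is_minimal_prime_ideal_def by blast
  qed
qed

end
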